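(* Let $\Lambda_1,\dots,\Lambda_m$ be mutually disjoint bounded open sets in $\mathbb R^d$ and $\Lambda=\bigcup_{j=1}^m\Lambda_j$. Let $E\subseteq\partial\Lambda$ be closed and $E_j=\partial\Lambda_j\cap E$. Then: (i) $E=\bigcup_{j=1}^mE_j$. (ii) Suppose that $\overline{\Lambda_j}\cap\overline{\Lambda_i}\subseteq E$ for every pair of indices $i\ne j$. For fixed $j$ and $\psi\in C^\infty_{E_j}(\Lambda_j)$, let $\Psi\in C^\infty_E(\mathbb R^d)$ be any function whose restriction to $\Lambda_j$ equals $\psi$. Then $\operatorname{supp}\Psi\cap\overline{\Lambda_j}$ and $\operatorname{supp}\Psi\cap\bigcup_{k\ne j}\overline{\Lambda_k}$ have positive distance to each other.
   Context: For an open set $\Lambda\subset\mathbb R^d$ and closed $F\subset\partial\Lambda$, $C^\infty_F(\Lambda)=\{v|_\Lambda: v\in C^\infty_0(\mathbb R^d),\ \operatorname{supp}v\cap F=\emptyset\}$; $C^\infty_E(\mathbb R^d)$ denotes the set of $v\in C^\infty_0(\mathbb R^d)$ with $\operatorname{supp}v\cap E=\emptyset$. *)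

theory Defs
  imports "HOL-Analysis.Analysis"
begin

coinductive smooth :: "('a::euclidean_space \<Rightarrow> real) \<Rightarrow> bool" where
  "(\<forall>x. f differentiable (at x)) \<Longrightarrow>
   (\<forall>u\<in>Basis. smooth (\<lambda>x. frechet_derivative f (at x) u)) \<Longrightarrow> smooth f"

definition supp :: "('a::euclidean_space \<Rightarrow> real) \<Rightarrow> 'a set" where
  "supp v = closure {x. v x \<noteq> 0}"

definition Cinf0 :: "('a::euclidean_space \<Rightarrow> real) set" where
  "Cinf0 = {v. smooth v \<and> compact (supp v)}"

definition CinfE :: "'a::euclidean_space set \<Rightarrow> ('a \<Rightarrow> real) set" where
  "CinfE E = {v \<in> Cinf0. supp v \<inter> E = {}}"

text \<open>C^\<infinity>_F(\<Lambda>): functions agreeing on \<Lambda> with some v in C^\<infinity>_F(R^d)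
  (functions on \<Lambda> represented by total functions; only values on \<Lambda> matter).\<close>
definition CinfF_on :: "'a::euclidean_space set \<Rightarrow> 'a set \<Rightarrow> ('a \<Rightarrow> real) set" where
  "CinfF_on \<Lambda> F = {\<psi>. \<exists>v \<in> CinfE F. \<forall>x\<in>\<Lambda>. \<psi> x = v x}"

text \<open>Two sets have positive distance (vacuous if one of them is empty).\<close>
definition pos_dist :: "'a::metric_space set \<Rightarrow> 'a set \<Rightarrow> bool" where
  "pos_dist A B \<longleftrightarrow> (\<exists>\<delta>>0. \<forall>x\<in>A. \<forall>y\<in>B. \<delta> \<le> dist x y)"

end

theory Submission
  imports Defs
begin

theorem lemma4p4:
  fixes \<Lambda> :: "nat \<Rightarrow> 'a::euclidean_space set" and m :: nat and E :: "'a set"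
  assumes opn: "\<And>j. j \<in> {1..m} \<Longrightarrow> open (\<Lambda> j)"
    and bdd: "\<And>j. j \<in> {1..m} \<Longrightarrow> bounded (\<Lambda> j)"
    and disj: "\<And>i j. i \<in> {1..m} \<Longrightarrow> j \<in> {1..m} \<Longrightarrow> i \<noteq> j \<Longrightarrow> \<Lambda> i \<inter> \<Lambda> j = {}"
    and clE: "closed E"
    and Esub: "E \<subseteq> frontier (\<Union>j\<in>{1..m}. \<Lambda> j)"
  shows "E = (\<Union>j\<in>{1..m}. frontier (\<Lambda> j) \<inter> E) \<and>
         ((\<forall>i\<in>{1..m}. \<forall>j\<in>{1..m}. i \<noteq> j \<longrightarrow> closure (\<Lambda> j) \<inter> closure (\<Lambda> i) \<subseteq> E) \<longrightarrow>
          (\<forall>j\<in>{1..m}. \<forall>\<psi> \<in> CinfF_on (\<Lambda> j) (frontier (\<Lambda> j) \<inter> E).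
             \<forall>\<Psi> \<in> CinfE E. (\<forall>x\<in>\<Lambda> j. \<Psi> x = \<psi> x) \<longrightarrow>
             pos_dist (supp \<Psi> \<inter> closure (\<Lambda> j)) (supp \<Psi> \<inter> (\<Union>k\<in>{1..m}-{j}. closure (\<Lambda> k)))))"
proof (intro conjI impI ballI)
  have cl: "closure (\<Union>j\<in>{1..m}. \<Lambda> j) \<subseteq> (\<Union>j\<in>{1..m}. closure (\<Lambda> j))"
    by (rule closure_minimal) (auto intro: closure_subset[THEN subsetD] closed_UN)
  have op: "open (\<Union>j\<in>{1..m}. \<Lambda> j)" using opn by auto
  have "E \<subseteq> (\<Union>j\<in>{1..m}. frontier (\<Lambda> j) \<inter> E)"
  proof
    fix x assume xE: "x \<in> E"
    then have x1: "x \<in> closure (\<Union>j\<in>{1..m}. \<Lambda> j)" and x2: "x \<notin> (\<Union>j\<in>{1..m}. \<Lambda> j)"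
      using Esub op interior_open[OF op] by (auto simp: frontier_def)
    then obtain j where j: "j \<in> {1..m}" "x \<in> closure (\<Lambda> j)" using cl by blast
    then have "x \<in> frontier (\<Lambda> j)" using x2 j interior_open[OF opn[OF j(1)]] by (auto simp: frontier_def)
    then show "x \<in> (\<Union>j\<in>{1..m}. frontier (\<Lambda> j) \<inter> E)" using j xE by blast
  qed
  then show "E = (\<Union>j\<in>{1..m}. frontier (\<Lambda> j) \<inter> E)" by blast
next
  fix j \<psi> \<Psi>
  assume H: "\<forall>i\<in>{1..m}. \<forall>j\<in>{1..m}. i \<noteq> j \<longrightarrow> closure (\<Lambda> j) \<inter> closure (\<Lambda> i) \<subseteq> E"
    and j: "j \<in> {1..m}" and P: "\<Psi> \<in> CinfE E"
  have c: "compact (supp \<Psi>)" and d: "supp \<Psi> \<inter> E = {}" using P by (auto simp: CinfE_def Cinf0_def)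
  have cA: "compact (supp \<Psi> \<inter> closure (\<Lambda> j))" using c by (simp add: compact_Int_closed)
  have cB: "closed (supp \<Psi> \<inter> (\<Union>k\<in>{1..m}-{j}. closure (\<Lambda> k)))"
    using c compact_imp_closed by (intro closed_Int closed_UN) auto
  have dj: "(supp \<Psi> \<inter> closure (\<Lambda> j)) \<inter> (supp \<Psi> \<inter> (\<Union>k\<in>{1..m}-{j}. closure (\<Lambda> k))) = {}"
    using H j d by blast
  show "pos_dist (supp \<Psi> \<inter> closure (\<Lambda> j)) (supp \<Psi> \<inter> (\<Union>k\<in>{1..m}-{j}. closure (\<Lambda> k)))"
    unfolding pos_dist_def using separate_compact_closed[OF cA cB dj] .
qed

end
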